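(* Let $G$ be a finite group and suppose there is a $1$-rotational solution under $G$ to $OP(a_\infty, a_1, a_2,\dots,a_N)$, where $a_\infty$ is the length of the cycle through $\infty$ in the $2$-factors. Then: (i) if $a_1,\dots,a_N$ are all even, there exists a solution to $OP(2a_\infty-1,\ {}^2a_1,\ {}^2a_2,\dots,{}^2a_N)$; (ii) for every odd prime $p$, there exists a solution to $OP(p(a_\infty-1)+1,\ {}^pa_1,\ {}^pa_2,\dots,{}^pa_N)$.
   Context: For positive integers $t_1,\dots,t_s\ge 3$ with $v=t_1+\dots+t_s$, a solution to the Oberwolfach problem $OP(t_1,\dots,t_s)$ is a $2$-factorization of the complete graph $K_v$ (a set of spanning $2$-regular subgraphs whose edge sets partition the edges of $K_v$) in which every $2$-factor is isomorphic to the vertex-disjoint union of cycles $C_{t_1}\cup\dots\cup C_{t_s}$. The notation ${}^k t$ in the argument list means $t$ repeated $k$ times. For a finite group $G$, $\overline{G}=G\cup\{\infty\}$, $G$ acts on $\overline{G}$ by right multiplication with $\infty g=\infty$, and a $2$-factorization $\mathcal{F}$ of $K_{\overline{G}}$ is $1$-rotational if $Fg\in\mathcal{F}$ for all $F\in\mathcal{F}$, $g\in G$ (where $Fg$ is obtained by replacing each vertex $v$ by $vg$). A $1$-rotational solution under $G$ to $OP(a_\infty,a_1,\dots,a_N)$ is a $1$-rotational $2$-factorization of $K_{\overline{G}}$ whose $2$-factors are each isomorphic to $C_{a_\infty}\cup C_{a_1}\cup\dots\cup C_{a_N}$. *)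

theory Defs
  imports "HOL-Algebra.Group" "HOL-Computational_Algebra.Primes"
begin

text \<open>Simple graphs are represented by their edge sets; an edge is a 2-element set.\<close>

definition complete_edges :: "'v set \<Rightarrow> 'v set set" where
  "complete_edges V = {e. \<exists>x y. x \<in> V \<and> y \<in> V \<and> x \<noteq> y \<and> e = {x, y}}"

text \<open>The standard graph C_{t_1} \<union> ... \<union> C_{t_s}: vertex (i,j) is the j-th vertex of the
  i-th cycle (i < s, j < t_i).\<close>

definition cycles_verts :: "nat list \<Rightarrow> (nat \<times> nat) set" where
  "cycles_verts ts = {(i, j). i < length ts \<and> j < ts ! i}"

definition cycles_graph :: "nat list \<Rightarrow> (nat \<times> nat) set set" where
  "cycles_graph ts =
     {{(i, j), (i, (j + 1) mod (ts ! i))} | i j. i < length ts \<and> j < ts ! i}"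

definition iso_cycles_via :: "'v set \<Rightarrow> 'v set set \<Rightarrow> nat list \<Rightarrow> ('v \<Rightarrow> nat \<times> nat) \<Rightarrow> bool" where
  "iso_cycles_via V F ts f \<longleftrightarrow>
     F \<subseteq> complete_edges V \<and> bij_betw f V (cycles_verts ts) \<and> (\<lambda>e. f ` e) ` F = cycles_graph ts"

definition iso_cycles :: "'v set \<Rightarrow> 'v set set \<Rightarrow> nat list \<Rightarrow> bool" where
  "iso_cycles V F ts \<longleftrightarrow> (\<exists>f. iso_cycles_via V F ts f)"

definition edge_partition :: "'v set \<Rightarrow> 'v set set set \<Rightarrow> bool" where
  "edge_partition V FF \<longleftrightarrow>
     \<Union> FF = complete_edges V \<and> (\<forall>F1\<in>FF. \<forall>F2\<in>FF. F1 \<noteq> F2 \<longrightarrow> F1 \<inter> F2 = {})"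

definition OP_solution :: "'v set \<Rightarrow> 'v set set set \<Rightarrow> nat list \<Rightarrow> bool" where
  "OP_solution V FF ts \<longleftrightarrow>
     (\<forall>t\<in>set ts. 3 \<le> t) \<and> edge_partition V FF \<and> (\<forall>F\<in>FF. iso_cycles V F ts)"

definition OP_solvable :: "nat list \<Rightarrow> bool" where
  "OP_solvable ts \<longleftrightarrow> (\<exists>FF. OP_solution {..<sum_list ts} FF ts)"

text \<open>The extended group: None plays the role of \<infinity>, Some g the group element g.
  Right action of G on G \<union> {\<infinity>}.\<close>

definition ext_carrier :: "('a, 'b) monoid_scheme \<Rightarrow> 'a option set" where
  "ext_carrier G = {None} \<union> Some ` carrier G"

fun ext_act :: "('a, 'b) monoid_scheme \<Rightarrow> 'a option \<Rightarrow> 'a \<Rightarrow> 'a option" where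
  "ext_act G None g = None"
| "ext_act G (Some x) g = Some (x \<otimes>\<^bsub>G\<^esub> g)"

definition translate_factor :: "('a, 'b) monoid_scheme \<Rightarrow> 'a option set set \<Rightarrow> 'a \<Rightarrow> 'a option set set" where
  "translate_factor G F g = (\<lambda>e. (\<lambda>v. ext_act G v g) ` e) ` F"

text \<open>A 1-rotational solution under G to OP(a_inf, a_1, ..., a_N), where a_inf is the
  length of the cycle through \<infinity> (the isomorphism sends \<infinity> into the first cycle).\<close>

definition one_rotational_solution ::
  "('a, 'b) monoid_scheme \<Rightarrow> 'a option set set set \<Rightarrow> nat \<Rightarrow> nat list \<Rightarrow> bool" where
  "one_rotational_solution G FF ainf as \<longleftrightarrow>
     (\<forall>t\<in>set (ainf # as). 3 \<le> t) \<and>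
     edge_partition (ext_carrier G) FF \<and>
     (\<forall>F\<in>FF. \<exists>f. iso_cycles_via (ext_carrier G) F (ainf # as) f \<and> fst (f None) = 0) \<and>
     (\<forall>F\<in>FF. \<forall>g\<in>carrier G. translate_factor G F g \<in> FF)"

end

theory Submission
  imports Defs
begin


lemma complete_edges_eq: "complete_edges V = {B. B \<subseteq> V \<and> card B = 2}"
  unfolding complete_edges_def by (auto simp: card_2_iff)

lemma card_complete_edges: "finite V \<Longrightarrow> card (complete_edges V) = card V * (card V - 1) div 2"
  unfolding complete_edges_eq by (simp add: n_subsets choose_two)

lemma finite_complete_edges: "finite V \<Longrightarrow> finite (complete_edges V)"
  unfolding complete_edges_eq by simp

lemma cycles_verts_Sigma: "cycles_verts ts = (SIGMA i:{..<length ts}. {..<ts!i})"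
  unfolding cycles_verts_def by auto

lemma card_cycles_verts: "card (cycles_verts ts) = sum_list ts"
  by (simp add: cycles_verts_Sigma card_SigmaI sum_list_sum_nth atLeast0LessThan)

lemma finite_cycles_verts: "finite (cycles_verts ts)"
  by (simp add: cycles_verts_Sigma)

definition cyc_edges :: "nat list \<Rightarrow> (nat \<Rightarrow> nat \<Rightarrow> 'w) \<Rightarrow> 'w set set" where
  "cyc_edges ts c = {{c i j, c i ((j+1) mod ts!i)} | i j. i < length ts \<and> j < ts!i}"

lemma cyc_edges_image: "cyc_edges ts c = (\<lambda>(i,j). {c i j, c i ((j+1) mod ts!i)}) ` cycles_verts ts"
  unfolding cyc_edges_def cycles_verts_def by auto

lemma cycles_graph_cyc: "cycles_graph ts = cyc_edges ts Pair"
  unfolding cycles_graph_def cyc_edges_def by auto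

lemma mod_suc_neq:
  fixes t j j' :: nat
  assumes "3 \<le> t" "j < t" "(j+1) mod t = j' " 
  shows "j' \<noteq> j" and "(j'+1) mod t \<noteq> j"
proof -
  show "j' \<noteq> j"
  proof (cases "j+1 < t")
    case False
    then have "j+1 = t" using assms by simp
    then show ?thesis using assms by auto
  qed (use assms in auto)
  show "(j'+1) mod t \<noteq> j"
  proof (cases "j + 1 < t")
    case True
    then have "j' = j+1" using assms by simp
    show ?thesis
    proof (cases "j+2 < t")
      case False
      then have "j+2 = t" using \<open>j' = j+1\<close> assms True by simp
      then show ?thesis using assms \<open>j' = j+1\<close> by auto
    qed (use assms \<open>j' = j+1\<close> in auto)
  next
    case False
    then have "j+1 = t" using assms by simp
    then have "j' = 0" using assms by simp
    then show ?thesis using assms False by auto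
  qed
qed

lemma cyc_edges_card:
  assumes inj: "inj_on (\<lambda>(i,j). c i j) (cycles_verts ts)"
    and ge3: "\<forall>t\<in>set ts. 3 \<le> t"
  shows "card (cyc_edges ts c) = sum_list ts"
proof -
  have "inj_on (\<lambda>(i,j). {c i j, c i ((j+1) mod ts!i)}) (cycles_verts ts)"
  proof (rule inj_onI, clarify)
    fix i j i' j'
    assume A: "(i,j) \<in> cycles_verts ts" "(i',j') \<in> cycles_verts ts"
      and E: "{c i j, c i ((j+1) mod ts!i)} = {c i' j', c i' ((j'+1) mod ts!i')}"
    have t3: "3 \<le> ts!i" "3 \<le> ts!i'" using A ge3 by (auto simp: cycles_verts_def)
    have B: "(i, (j+1) mod ts!i) \<in> cycles_verts ts" "(i', (j'+1) mod ts!i') \<in> cycles_verts ts"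
      using A t3 by (auto simp: cycles_verts_def)
    have injc: "\<And>a b a' b'. (a,b) \<in> cycles_verts ts \<Longrightarrow> (a',b') \<in> cycles_verts ts \<Longrightarrow> c a b = c a' b' \<Longrightarrow> a = a' \<and> b = b'"
      using inj unfolding inj_on_def by fastforce
    show "i = i' \<and> j = j'"
    proof (cases "c i j = c i' j'")
      case True then show ?thesis using injc A by blast
    next
      case False
      then have 1: "c i j = c i' ((j'+1) mod ts!i')" and 2: "c i ((j+1) mod ts!i) = c i' j'"
        using E by (auto simp: doubleton_eq_iff)
      from injc[OF A(1) B(2) 1] have ii: "i = i'" and jj: "j = (j'+1) mod ts!i'" by auto
      from injc[OF B(1) A(2) 2] have jj': "(j+1) mod ts!i = j'" by auto
      have "(j'+1) mod ts!i \<noteq> j" using mod_suc_neq(2)[OF t3(1) _ jj'] A by (auto simp: cycles_verts_def)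
      then show ?thesis using jj ii by simp
    qed
  qed
  then show ?thesis by (simp add: cyc_edges_image card_image card_cycles_verts)
qed

lemma card_cycles_graph: "\<forall>t\<in>set ts. 3 \<le> t \<Longrightarrow> card (cycles_graph ts) = sum_list ts"
  unfolding cycles_graph_cyc by (rule cyc_edges_card) (auto simp: inj_on_def)

lemma cyc_edges_iso:
  assumes inj: "inj_on (\<lambda>(i,j). c i j) (cycles_verts ts)"
    and img: "(\<lambda>(i,j). c i j) ` cycles_verts ts = V"
    and ge3: "\<forall>t\<in>set ts. 3 \<le> t"
  shows "iso_cycles V (cyc_edges ts c) ts"
proof -
  let ?C = "\<lambda>(i,j). c i j"
  define f where "f = the_inv_into (cycles_verts ts) ?C"
  have bij: "bij_betw f V (cycles_verts ts)"
  proof -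
    have "bij_betw ?C (cycles_verts ts) V" using inj img by (simp add: bij_betw_def)
    then show ?thesis unfolding f_def by (rule bij_betw_the_inv_into)
  qed
  have finv: "\<And>i j. (i,j) \<in> cycles_verts ts \<Longrightarrow> f (c i j) = (i,j)"
    unfolding f_def using the_inv_into_f_f[OF inj] by fastforce
  have sub: "cyc_edges ts c \<subseteq> complete_edges V"
  proof
    fix e assume "e \<in> cyc_edges ts c"
    then obtain i j where ij: "i < length ts" "j < ts!i" and e: "e = {c i j, c i ((j+1) mod ts!i)}"
      unfolding cyc_edges_def by auto
    have t3: "3 \<le> ts!i" using ij ge3 by auto
    have A: "(i,j) \<in> cycles_verts ts" "(i,(j+1) mod ts!i) \<in> cycles_verts ts"
      using ij t3 by (auto simp: cycles_verts_def)
    have "(j+1) mod ts!i \<noteq> j" using mod_suc_neq(1)[OF t3 ij(2)] by simp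
    then have "c i j \<noteq> c i ((j+1) mod ts!i)" using inj A unfolding inj_on_def by fastforce
    moreover have "c i j \<in> V" "c i ((j+1) mod ts!i) \<in> V" using A img by force+
    ultimately show "e \<in> complete_edges V" unfolding e complete_edges_def by blast
  qed
  have "(\<lambda>e. f ` e) ` cyc_edges ts c = cycles_graph ts"
  proof -
    have "(\<lambda>e. f ` e) ` cyc_edges ts c = (\<lambda>(i,j). {(i,j), (i, (j+1) mod ts!i)}) ` cycles_verts ts"
      unfolding cyc_edges_image image_image
    proof (rule image_cong[OF refl], clarify)
      fix i j assume x: "(i,j) \<in> cycles_verts ts"
      have t3: "3 \<le> ts!i" using x ge3 by (auto simp: cycles_verts_def)
      have "(i,(j+1) mod ts!i) \<in> cycles_verts ts" using x t3 by (auto simp: cycles_verts_def)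
      then show "f ` {c i j, c i ((j + 1) mod ts ! i)} = {(i, j), (i, (j + 1) mod ts ! i)}"
        using finv x by simp
    qed
    also have "\<dots> = cycles_graph ts" unfolding cycles_graph_cyc cyc_edges_image by simp
    finally show ?thesis .
  qed
  then show ?thesis unfolding iso_cycles_def iso_cycles_via_def using bij sub by blast
qed

lemma cyc_edges_finite: "finite (cyc_edges ts c)"
  unfolding cyc_edges_image by (simp add: finite_cycles_verts)


lemma complete_edges_image:
  assumes "inj_on h V"
  shows "(\<lambda>e. h ` e) ` complete_edges V = complete_edges (h ` V)"
  using assms unfolding complete_edges_def inj_on_def by (auto simp: image_iff) blast+

lemma mod_add_cancel_nat: "((a::nat) + c) mod n = (b + c) mod n \<Longrightarrow> a mod n = b mod n"
  by (simp add: nat_mod_eq_iff)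

lemma complete_edges_Pow: "complete_edges V \<subseteq> Pow V"
  unfolding complete_edges_def by auto

lemma OP_solution_transfer:
  assumes sol: "OP_solution V FF ts" and h: "bij_betw h V W"
  shows "OP_solution W ((\<lambda>F. (\<lambda>e. h ` e) ` F) ` FF) ts"
proof -
  have inj: "inj_on h V" and hV: "h ` V = W" using h by (auto simp: bij_betw_def)
  have injP: "inj_on (\<lambda>e. h ` e) (Pow V)" using inj by (rule inj_on_image_Pow)
  have ep: "edge_partition V FF" and ge: "\<forall>t\<in>set ts. 3 \<le> t" and iso: "\<forall>F\<in>FF. iso_cycles V F ts"
    using sol unfolding OP_solution_def by auto
  have un: "\<Union>FF = complete_edges V" and dj: "\<forall>F1\<in>FF. \<forall>F2\<in>FF. F1 \<noteq> F2 \<longrightarrow> F1 \<inter> F2 = {}"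
    using ep unfolding edge_partition_def by auto
  have FV: "\<And>F. F \<in> FF \<Longrightarrow> F \<subseteq> Pow V" using un complete_edges_Pow by blast
  have U: "\<Union> ((\<lambda>F. (\<lambda>e. h ` e) ` F) ` FF) = complete_edges W"
    proof -
      have "\<Union> ((\<lambda>F. (\<lambda>e. h ` e) ` F) ` FF) = (\<lambda>e. h ` e) ` \<Union>FF" by (simp add: image_Union)
      then show ?thesis using complete_edges_image[OF inj] un hV by simp
    qed
  have D: "\<forall>F1\<in>(\<lambda>F. (\<lambda>e. h ` e) ` F) ` FF. \<forall>F2\<in>(\<lambda>F. (\<lambda>e. h ` e) ` F) ` FF. F1 \<noteq> F2 \<longrightarrow> F1 \<inter> F2 = {}"
  proof (intro ballI impI)
    fix F1 F2 assume F1: "F1 \<in> (\<lambda>F. (\<lambda>e. h ` e) ` F) ` FF" and F2: "F2 \<in> (\<lambda>F. (\<lambda>e. h ` e) ` F) ` FF"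
      and ne: "F1 \<noteq> F2"
    obtain G1 where G1: "G1 \<in> FF" "F1 = (\<lambda>e. h ` e) ` G1" using F1 by auto
    obtain G2 where G2: "G2 \<in> FF" "F2 = (\<lambda>e. h ` e) ` G2" using F2 by auto
    have "G1 \<noteq> G2" using ne G1 G2 by auto
    then have d: "G1 \<inter> G2 = {}" using dj G1 G2 by auto
    show "F1 \<inter> F2 = {}"
    proof (rule ccontr)
      assume "F1 \<inter> F2 \<noteq> {}"
      then obtain e1 e2 where e: "e1 \<in> G1" "e2 \<in> G2" "h ` e1 = h ` e2" using G1 G2 by auto
      have "e1 = e2" using injP e FV G1 G2 unfolding inj_on_def by blast
      then show False using d e by auto
    qed
  qed
  have "edge_partition W ((\<lambda>F. (\<lambda>e. h ` e) ` F) ` FF)"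
    unfolding edge_partition_def using U D by blast
  moreover have "\<forall>F\<in>(\<lambda>F. (\<lambda>e. h ` e) ` F) ` FF. iso_cycles W F ts"
  proof
    fix F' assume "F' \<in> (\<lambda>F. (\<lambda>e. h ` e) ` F) ` FF"
    then obtain F where F: "F \<in> FF" "F' = (\<lambda>e. h ` e) ` F" by auto
    obtain f where f: "iso_cycles_via V F ts f" using iso F unfolding iso_cycles_def by auto
    define g where "g = inv_into V h"
    have gb: "bij_betw g W V" unfolding g_def using h bij_betw_inv_into by blast
    have "bij_betw (f \<circ> g) W (cycles_verts ts)"
      using gb f unfolding iso_cycles_via_def by (auto intro: bij_betw_trans)
    moreover have "F' \<subseteq> complete_edges W"
      using F f complete_edges_image[OF inj] hV unfolding iso_cycles_via_def by auto
    moreover have "(\<lambda>e. (f \<circ> g) ` e) ` F' = cycles_graph ts"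
    proof -
      have eqe: "(f \<circ> g) ` (h ` e) = f ` e" if "e \<in> F" for e
      proof -
        have "e \<subseteq> V" using FV F that by auto
        then show ?thesis
          unfolding g_def image_comp[symmetric] using inv_into_image_cancel[OF inj] by simp
      qed
      have "(\<lambda>e. (f \<circ> g) ` e) ` F' = (\<lambda>e. (f \<circ> g) ` (h ` e)) ` F"
        unfolding F(2) by (rule image_image)
      also have "\<dots> = (\<lambda>e. f ` e) ` F" by (rule image_cong[OF refl]) (rule eqe)
      finally have "(\<lambda>e. (f \<circ> g) ` e) ` F' = (\<lambda>e. f ` e) ` F" .
      then show ?thesis using f unfolding iso_cycles_via_def by simp
    qed
    ultimately show "iso_cycles W F' ts" unfolding iso_cycles_def iso_cycles_via_def by blast
  qed
  ultimately show ?thesis using ge unfolding OP_solution_def by blast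
qed

lemma OP_solvable_from:
  assumes "OP_solution V FF ts" "finite V" "card V = sum_list ts"
  shows "OP_solvable ts"
proof -
  obtain h where "bij_betw h V {..<sum_list ts}"
    using assms by (metis bij_betw_iff_card card_lessThan finite_lessThan)
  then show ?thesis unfolding OP_solvable_def using OP_solution_transfer assms(1) by blast
qed

lemma rotate_iso:
  assumes iso: "iso_cycles_via V F ts f" and v: "v \<in> V" and fv: "f v = (0, r)" and ne: "ts \<noteq> []"
    and ge: "\<forall>t\<in>set ts. 3 \<le> t"
  shows "\<exists>g. iso_cycles_via V F ts g \<and> g v = (0,0)"
proof -
  let ?t = "ts!0"
  define \<rho> where "\<rho> = (\<lambda>(i::nat,j::nat). if i = 0 then (0::nat, (j + (?t - r)) mod ?t) else (i,j))"
  have bf: "bij_betw f V (cycles_verts ts)" using iso unfolding iso_cycles_via_def by auto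
  have r: "r < ?t" using fv v bf unfolding bij_betw_def cycles_verts_def by force
  have t0: "0 < ?t" using r by simp
  have into: "\<rho> ` cycles_verts ts \<subseteq> cycles_verts ts"
    unfolding \<rho>_def cycles_verts_def using t0 ne by (auto split: if_splits)
  have injr: "inj_on \<rho> (cycles_verts ts)"
  proof (rule inj_onI, clarify)
    fix i j i' j' assume A: "(i,j) \<in> cycles_verts ts" "(i',j') \<in> cycles_verts ts" "\<rho> (i,j) = \<rho> (i',j')"
    show "i = i' \<and> j = j'"
    proof (cases "i = 0")
      case True
      then have "i' = 0" using A(3) unfolding \<rho>_def by (auto split: if_splits)
      then have "(j + (?t - r)) mod ?t = (j' + (?t - r)) mod ?t" using A(3) True unfolding \<rho>_def by auto
      then have "j mod ?t = j' mod ?t" by (rule mod_add_cancel_nat)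
      then show ?thesis using A True \<open>i' = 0\<close> by (auto simp: cycles_verts_def)
    next
      case False
      then show ?thesis using A unfolding \<rho>_def by (auto split: if_splits)
    qed
  qed
  have rb: "bij_betw \<rho> (cycles_verts ts) (cycles_verts ts)"
    using endo_inj_surj[OF finite_cycles_verts into injr] injr by (simp add: bij_betw_def)
  define g where "g = \<rho> \<circ> f"
  have gb: "bij_betw g V (cycles_verts ts)" unfolding g_def using bf rb by (rule bij_betw_trans)
  have gv: "g v = (0,0)" unfolding g_def \<rho>_def using fv r by simp
  have "(\<lambda>e. \<rho> ` e) ` cycles_graph ts \<subseteq> cycles_graph ts"
  proof
    fix e' assume "e' \<in> (\<lambda>e. \<rho> ` e) ` cycles_graph ts"
    then obtain i j where ij: "i < length ts" "j < ts!i" and e': "e' = \<rho> ` {(i,j), (i, (j+1) mod ts!i)}"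
      unfolding cycles_graph_def by auto
    show "e' \<in> cycles_graph ts"
    proof (cases "i = 0")
      case True
      let ?j = "(j + (?t - r)) mod ?t"
      have "((j+1) mod ?t + (?t - r)) mod ?t = (?j + 1) mod ?t"
        by (simp add: mod_simps ac_simps)
      then have "e' = {(0, ?j), (0, (?j+1) mod ts!0)}" unfolding e' \<rho>_def using True by simp
      moreover have "?j < ts!0" using t0 by simp
      ultimately show ?thesis unfolding cycles_graph_def using True ij by blast
    next
      case False
      then show ?thesis unfolding e' \<rho>_def cycles_graph_def using ij by auto
    qed
  qed
  moreover have "card ((\<lambda>e. \<rho> ` e) ` cycles_graph ts) = card (cycles_graph ts)"
  proof (rule card_image)
    have "cycles_graph ts \<subseteq> Pow (cycles_verts ts)"
      unfolding cycles_graph_def cycles_verts_def by auto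
    then show "inj_on (\<lambda>e. \<rho> ` e) (cycles_graph ts)"
      using inj_on_image_Pow[OF injr] inj_on_subset by blast
  qed
  moreover have "finite (cycles_graph ts)" unfolding cycles_graph_cyc by (rule cyc_edges_finite)
  ultimately have eq: "(\<lambda>e. \<rho> ` e) ` cycles_graph ts = cycles_graph ts" by (simp add: card_subset_eq)
  have "(\<lambda>e. g ` e) ` F = (\<lambda>e. \<rho> ` e) ` ((\<lambda>e. f ` e) ` F)"
    unfolding g_def image_image by (simp add: image_comp)
  also have "\<dots> = cycles_graph ts" using iso eq unfolding iso_cycles_via_def by simp
  finally have "(\<lambda>e. g ` e) ` F = cycles_graph ts" .
  then show ?thesis using gb gv iso unfolding iso_cycles_via_def by blast
qed


lemma concat_rep_length: "length (concat (map (replicate p) xs)) = p * length xs"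
  by (induction xs) auto

lemma concat_rep_sum: "sum_list (concat (map (replicate p) xs)) = p * sum_list (xs::nat list)"
  by (induction xs) (auto simp: sum_list_replicate algebra_simps)

lemma concat_rep_nth: "n < p * length xs \<Longrightarrow> concat (map (replicate p) xs) ! n = xs ! (n div p)"
proof (induction xs arbitrary: n)
  case Nil then show ?case by simp
next
  case (Cons x xs)
  show ?case
  proof (cases "n < p")
    case True then show ?thesis by (simp add: nth_append)
  next
    case False
    have pp: "0 < p" using Cons.prems by (cases "p = 0") auto
    have "n - p < p * length xs" using Cons.prems False by simp
    then have "concat (map (replicate p) xs) ! (n - p) = xs ! ((n - p) div p)" by (rule Cons.IH)
    moreover have "(n - p) div p = n div p - 1"
    proof -
      have "n = (n - p) + p" using False by simp
      then have "n div p = (n - p) div p + 1" using pp by (metis div_add_self2 less_not_refl2)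
      then show ?thesis by simp
    qed
    moreover have "n div p \<noteq> 0" using False pp by (simp add: div_eq_0_iff)
    ultimately show ?thesis using False
      by (simp add: nth_append)
  qed
qed

lemma set_concat_rep: "0 < p \<Longrightarrow> set (concat (map (replicate p) xs)) = set xs"
  by (induction xs) auto

locale constr =
  fixes V :: "'v set" and inf :: 'v and FF :: "'v set set set" and ts :: "nat list" and p :: nat
    and fm :: "'v set set \<Rightarrow> 'v \<Rightarrow> nat \<times> nat"
  assumes finV: "finite V" and infV: "inf \<in> V" and part: "edge_partition V FF"
    and fmF: "\<And>F. F \<in> FF \<Longrightarrow> iso_cycles_via V F ts (fm F)"
    and fminf: "\<And>F. F \<in> FF \<Longrightarrow> fm F inf = (0,0)"
    and ts_ne: "ts \<noteq> []" and ge3: "\<forall>t\<in>set ts. 3 \<le> t"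
    and pcase: "(odd p \<and> 3 \<le> p) \<or> (p = 2 \<and> (\<forall>i. 0 < i \<and> i < length ts \<longrightarrow> even (ts!i)))"
begin

abbreviation "a \<equiv> ts!0"

lemma p2: "2 \<le> p" using pcase by auto
lemma a3: "3 \<le> a" using ge3 ts_ne by auto
lemma ts_ge: "i < length ts \<Longrightarrow> 3 \<le> ts!i" using ge3 by auto

lemma cv_iff: "(i,j) \<in> cycles_verts ts \<longleftrightarrow> i < length ts \<and> j < ts!i"
  by (simp add: cycles_verts_def)

definition vv :: "'v set set \<Rightarrow> nat \<Rightarrow> nat \<Rightarrow> 'v" where
  "vv F i j = inv_into V (fm F) (i,j)"

lemma bijF: "F \<in> FF \<Longrightarrow> bij_betw (fm F) V (cycles_verts ts)"
  using fmF unfolding iso_cycles_via_def by auto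

lemma vv_in: "F \<in> FF \<Longrightarrow> (i,j) \<in> cycles_verts ts \<Longrightarrow> vv F i j \<in> V"
  unfolding vv_def using bijF by (metis bij_betw_def inv_into_into)

lemma fm_vv: "F \<in> FF \<Longrightarrow> (i,j) \<in> cycles_verts ts \<Longrightarrow> fm F (vv F i j) = (i,j)"
  unfolding vv_def using bijF by (metis bij_betw_def f_inv_into_f)

lemma vv_fm: "F \<in> FF \<Longrightarrow> x \<in> V \<Longrightarrow> vv F (fst (fm F x)) (snd (fm F x)) = x"
  unfolding vv_def using bijF by (simp add: bij_betw_def)

lemma vv_inj: "F \<in> FF \<Longrightarrow> (i,j) \<in> cycles_verts ts \<Longrightarrow> (i',j') \<in> cycles_verts ts \<Longrightarrow>
    vv F i j = vv F i' j' \<Longrightarrow> i = i' \<and> j = j'"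
  by (metis fm_vv prod.inject)

lemma vv_inf: "F \<in> FF \<Longrightarrow> vv F 0 0 = inf"
  using vv_fm[of F inf] fminf infV by simp

lemma cv00: "(0,0) \<in> cycles_verts ts" using ts_ne a3 by (simp add: cv_iff)

lemma vv_ne_inf: "F \<in> FF \<Longrightarrow> (i,j) \<in> cycles_verts ts \<Longrightarrow> (i,j) \<noteq> (0,0) \<Longrightarrow> vv F i j \<noteq> inf"
  using vv_inj[of F i j 0 0] cv00 vv_inf by auto

lemma vv_edge:
  assumes F: "F \<in> FF" and ij: "(i,j) \<in> cycles_verts ts"
  shows "{vv F i j, vv F i ((j+1) mod ts!i)} \<in> F"
proof -
  have "{(i,j), (i, (j+1) mod ts!i)} \<in> cycles_graph ts"
    using ij unfolding cycles_graph_def cv_iff by blast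
  moreover have gi: "(\<lambda>e. fm F ` e) ` F = cycles_graph ts"
    using fmF[OF F] unfolding iso_cycles_via_def by blast
  ultimately have "{(i,j), (i, (j+1) mod ts!i)} \<in> (\<lambda>e. fm F ` e) ` F" by simp
  then obtain e where e: "e \<in> F" "fm F ` e = {(i,j), (i, (j+1) mod ts!i)}"
    by (metis (no_types, lifting) imageE)
  have "F \<subseteq> complete_edges V" using fmF[OF F] unfolding iso_cycles_via_def by simp
  then have "e \<in> Pow V" using e(1) complete_edges_Pow by (meson subsetD)
  then have eV: "e \<subseteq> V" by simp
  have ij2: "(i, (j+1) mod ts!i) \<in> cycles_verts ts" using ij ts_ge by (auto simp: cv_iff)
  have "e = {vv F i j, vv F i ((j+1) mod ts!i)}"
  proof
    show "e \<subseteq> {vv F i j, vv F i ((j+1) mod ts!i)}"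
    proof
      fix x assume x: "x \<in> e"
      then have "fm F x \<in> {(i,j), (i, (j+1) mod ts!i)}" using e by blast
      then show "x \<in> {vv F i j, vv F i ((j+1) mod ts!i)}" using vv_fm[OF F, of x] x eV by auto
    qed
    show "{vv F i j, vv F i ((j+1) mod ts!i)} \<subseteq> e"
    proof -
      have "(i,j) \<in> fm F ` e" "(i, (j+1) mod ts!i) \<in> fm F ` e" using e by auto
      then obtain x y where xy: "x \<in> e" "fm F x = (i,j)" "y \<in> e" "fm F y = (i, (j+1) mod ts!i)"
        by (metis imageE)
      have "vv F i j = x" using vv_fm[OF F, of x] xy eV by auto
      moreover have "vv F i ((j+1) mod ts!i) = y" using vv_fm[OF F, of y] xy eV by auto
      ultimately show ?thesis using xy by simp
    qed
  qed
  then show ?thesis using e by simp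
qed

definition pot :: "nat \<Rightarrow> nat \<Rightarrow> nat" where
  "pot i j = (if i = 0 then (j - 1) mod 2 else if odd (ts!i) \<and> j = ts!i - 1 then 2 else j mod 2)"

definition Phi :: "'v set set \<Rightarrow> 'v \<Rightarrow> nat" where
  "Phi F x = pot (fst (fm F x)) (snd (fm F x))"

lemma Phi_vv: "F \<in> FF \<Longrightarrow> (i,j) \<in> cycles_verts ts \<Longrightarrow> Phi F (vv F i j) = pot i j"
  unfolding Phi_def using fm_vv by simp

lemma pot_le: "pot i j \<le> 2" unfolding pot_def by auto

lemma pot_le1: "p = 2 \<Longrightarrow> 0 < i \<Longrightarrow> i < length ts \<Longrightarrow> pot i j \<le> 1"
  using pcase unfolding pot_def by auto

lemma pot_adj:
  assumes "0 < i" "i < length ts" "j < ts!i"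
  shows "pot i j \<noteq> pot i ((j+1) mod ts!i)"
proof -
  have t3: "3 \<le> ts!i" using ts_ge assms by auto
  show ?thesis
  proof (cases "j + 1 < ts!i")
    case True
    have m: "(j+1) mod ts!i = j+1" using True by simp
    have d: "j mod 2 \<noteq> (j+1) mod 2" by presburger
    show ?thesis unfolding m pot_def using assms True d by auto
  next
    case False
    then have e: "j + 1 = ts!i" using assms by simp
    then have m: "(j+1) mod ts!i = 0" by simp
    have "j mod 2 \<noteq> 0 \<or> odd (ts!i)" using e by presburger
    then show ?thesis unfolding m pot_def using assms e t3 by auto
  qed
qed

definition h :: "nat \<Rightarrow> nat" where
  "h j = (if even j then (p - j div 2) mod p else (j+1) div 2)"

lemma h_lt: "j < p \<Longrightarrow> h j < p"
  unfolding h_def using p2 by auto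

lemma h_inj: assumes "j < p" "j' < p" "h j = h j'" shows "j = j'"
proof (cases "p = 2")
  case True
  then have "j \<in> {0,1}" "j' \<in> {0,1}" using assms by auto
  then show ?thesis using assms True unfolding h_def by auto
next
  case False
  then have op: "odd p" using pcase by auto
  obtain k where pk: "p = 2*k+1" using op by (rule oddE)
  have A: "h j = (if j = 0 then 0 else if even j then p - j div 2 else (j+1) div 2)" for j
    unfolding h_def using p2 by auto
  have R: "(j = 0 \<and> h j = 0) \<or> (even j \<and> 0 < j \<and> (p+1) div 2 \<le> h j \<and> h j = p - j div 2)
     \<or> (odd j \<and> 1 \<le> h j \<and> h j \<le> (p-1) div 2 \<and> h j = (j+1) div 2)" if "j < p" for j
  proof -
    consider "j = 0" | "even j" "0 < j" | "odd j" by auto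
    then show ?thesis
    proof cases
      case 1 then show ?thesis unfolding A by simp
    next
      case 2
      have "j div 2 \<le> k" using that pk by linarith
      then have "(p+1) div 2 \<le> p - j div 2" unfolding pk by simp
      then show ?thesis using 2 unfolding A by simp
    next
      case 3
      have "(j+1) div 2 \<le> (2*k+1) div 2" using that pk by (intro div_le_mono) simp
      then have "(j+1) div 2 \<le> (p-1) div 2" unfolding pk by simp
      moreover have "1 \<le> (j+1) div 2" using 3 by (elim oddE) simp
      ultimately show ?thesis using 3 unfolding A by simp
    qed
  qed
  have p1: "(p-1) div 2 < (p+1) div 2" unfolding pk by simp
  have E1: "j = j'" if "p - j div 2 = p - j' div 2" "even j" "even j'"
  proof -
    have "j div 2 = j' div 2" using that assms by linarith
    then show ?thesis using that by (metis even_two_times_div_two)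
  qed
  have E2: "j = j'" if "(j+1) div 2 = (j'+1) div 2" "odd j" "odd j'"
  proof -
    have "even (j+1)" "even (j'+1)" using that by auto
    then have "j + 1 = j' + 1" using that(1) by (metis even_two_times_div_two)
    then show ?thesis by simp
  qed
  have p0: "1 \<le> (p+1) div 2" unfolding pk by simp
  show ?thesis using R[OF assms(1)] R[OF assms(2)] assms(3)
  proof (elim disjE conjE)
  qed (use E1 E2 p0 p1 in \<open>simp_all\<close>)
qed

lemma h_sum_odd:
  assumes "odd p" "j + 1 < p"
  shows "(h j + h (j+1)) mod p = (if even j then 1 else 0)"
proof (cases "even j")
  case True
  show ?thesis
  proof (cases "j = 0")
    case True then show ?thesis using assms p2 unfolding h_def by auto
  next
    case False
    have "h j = p - j div 2" using False True assms p2 unfolding h_def by auto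
    moreover have "h (j+1) = j div 2 + 1" using True unfolding h_def by auto
    moreover have "j div 2 < p" using assms by auto
    ultimately have "h j + h (j+1) = p + 1" by simp
    then show ?thesis using True assms p2 by (simp add: mod_Suc)
  qed
next
  case False
  have "h j = (j+1) div 2" using False unfolding h_def by auto
  moreover have "h (j+1) = p - (j+1) div 2" using False assms unfolding h_def by auto
  moreover have "(j+1) div 2 < p" using assms by auto
  ultimately have "h j + h (j+1) = p" by simp
  then show ?thesis using False by simp
qed

definition flip :: "nat \<Rightarrow> bool" where "flip s \<longleftrightarrow> p = 2 \<and> s = 1"
definition fw :: "nat \<Rightarrow> nat \<Rightarrow> bool" where "fw s j \<longleftrightarrow> (even j \<noteq> flip s)"
definition posn :: "nat \<Rightarrow> nat \<Rightarrow> nat \<Rightarrow> nat" where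
  "posn s j q = (if fw s j then q else a - 2 - q)"

definition zz :: "'v set set \<Rightarrow> nat \<Rightarrow> nat \<Rightarrow> nat \<Rightarrow> 'v \<times> nat" where
  "zz F s j q = (vv F 0 (posn s j q + 1), (s + h j + s * (posn s j q mod 2)) mod p)"

definition cc :: "'v set set \<Rightarrow> nat \<Rightarrow> nat \<Rightarrow> nat \<Rightarrow> 'v \<times> nat" where
  "cc F s i m = (if i = 0 then (if m = 0 then (inf, 0) else zz F s ((m-1) div (a-1)) ((m-1) mod (a-1)))
     else (vv F ((i-1) div p + 1) m, ((i-1) mod p + s * pot ((i-1) div p + 1) m) mod p))"

definition ts' :: "nat list" where
  "ts' = (p * (a - 1) + 1) # concat (map (replicate p) (tl ts))"

definition newF :: "'v set set \<Rightarrow> nat \<Rightarrow> ('v \<times> nat) set set" where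
  "newF F s = cyc_edges ts' (cc F s)"

definition V' :: "('v \<times> nat) set" where
  "V' = insert (inf, 0) ((V - {inf}) \<times> {..<p})"

lemma length_ts': "length ts' = 1 + p * (length ts - 1)"
  unfolding ts'_def by (simp add: concat_rep_length)

lemma ts'0: "ts'!0 = p * (a - 1) + 1" unfolding ts'_def by simp

lemma ts'_nth: assumes "0 < i" "i < length ts'" shows "ts'!i = ts!((i-1) div p + 1)"
proof -
  have "i - 1 < p * length (tl ts)" using assms length_ts' by simp
  then have "ts'!i = tl ts ! ((i-1) div p)"
    unfolding ts'_def using assms by (simp add: concat_rep_nth nth_Cons')
  then show ?thesis using ts_ne by (cases ts) auto
qed

lemma idx_lt: assumes "0 < i" "i < length ts'" shows "(i-1) div p + 1 < length ts"
proof -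
  have "i - 1 < p * (length ts - 1)" using assms length_ts' by simp
  then have "(i-1) div p < length ts - 1" using p2 by (simp add: div_less_iff_less_mult mult.commute)
  then show ?thesis by simp
qed

lemma ge3': "\<forall>t\<in>set ts'. 3 \<le> t"
proof -
  have "3 \<le> p * (a - 1) + 1"
  proof -
    have "2 * 2 \<le> p * (a - 1)" using p2 a3 by (intro mult_mono) auto
    then show ?thesis by simp
  qed
  moreover have "\<forall>t\<in>set (concat (map (replicate p) (tl ts))). 3 \<le> t"
    using set_concat_rep[of p "tl ts"] p2 ge3 ts_ne by (cases ts) auto
  ultimately show ?thesis unfolding ts'_def by simp
qed

lemma sum_ts: "sum_list ts = a + sum_list (tl ts)"
  using ts_ne by (cases ts) auto

lemma card_V: assumes "F \<in> FF" shows "card V = sum_list ts"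
  using bij_betw_same_card[OF bijF[OF assms]] card_cycles_verts by simp

lemma card_V': "card V' = 1 + p * (card V - 1)"
proof -
  have "(inf,0) \<notin> (V - {inf}) \<times> {..<p}" by auto
  moreover have "finite ((V - {inf}) \<times> {..<p})" using finV by simp
  ultimately show ?thesis unfolding V'_def using infV finV by (simp add: card_cartesian_product)
qed

lemma finite_V': "finite V'" unfolding V'_def using finV by simp

lemma sum_ts': "sum_list ts' = p * (a - 1) + 1 + p * sum_list (tl ts)"
  unfolding ts'_def by (simp add: concat_rep_sum)

lemma card_V'_sum: assumes "F \<in> FF" shows "card V' = sum_list ts'"
proof -
  have "card V - 1 = (a - 1) + sum_list (tl ts)" using card_V[OF assms] sum_ts a3 by simp
  then show ?thesis unfolding card_V' sum_ts' by (simp add: algebra_simps)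
qed

end


context constr
begin

lemma cv'_iff: "(i,m) \<in> cycles_verts ts' \<longleftrightarrow> i < length ts' \<and> m < ts'!i"
  by (simp add: cycles_verts_def)

definition oldpos :: "nat \<Rightarrow> nat \<Rightarrow> nat \<Rightarrow> nat \<times> nat" where
  "oldpos s i m = (if i = 0 then (if m = 0 then (0,0) else (0, posn s ((m-1) div (a-1)) ((m-1) mod (a-1)) + 1))
     else ((i-1) div p + 1, m))"

lemma jq_bounds:
  assumes "0 < m" "m < p * (a - 1) + 1"
  shows "(m-1) div (a-1) < p" "(m-1) mod (a-1) \<le> a - 2"
proof -
  have a1: "0 < a - 1" using a3 by simp
  have "m - 1 < p * (a-1)" using assms by simp
  then show "(m-1) div (a-1) < p" using a1 by (simp add: div_less_iff_less_mult)
  have "(m-1) mod (a-1) < a - 1" using a1 by simp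
  then show "(m-1) mod (a-1) \<le> a - 2" by simp
qed

lemma posn_le: "q \<le> a - 2 \<Longrightarrow> posn s j q \<le> a - 2"
  unfolding posn_def by auto

lemma oldpos_cv:
  assumes "(i,m) \<in> cycles_verts ts'"
  shows "oldpos s i m \<in> cycles_verts ts"
proof (cases "i = 0")
  case True
  show ?thesis
  proof (cases "m = 0")
    case True then show ?thesis using \<open>i = 0\<close> cv00 unfolding oldpos_def by simp
  next
    case False
    have "m < p * (a-1) + 1" using assms True by (simp add: cv'_iff ts'0)
    then have "posn s ((m-1) div (a-1)) ((m-1) mod (a-1)) \<le> a - 2"
      using jq_bounds False posn_le by simp
    then show ?thesis using True False a3 ts_ne unfolding oldpos_def by (simp add: cv_iff)
  next
  qed
next
  case False
  then show ?thesis using assms idx_lt ts'_nth unfolding oldpos_def by (auto simp: cv_iff cv'_iff)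
qed

lemma oldpos_00: "oldpos s i m = (0,0) \<longleftrightarrow> i = 0 \<and> m = 0"
  unfolding oldpos_def by auto

lemma fst_oldpos_0: "fst (oldpos s i m) = 0 \<longleftrightarrow> i = 0"
  unfolding oldpos_def by auto

lemma fst_cc: "F \<in> FF \<Longrightarrow> fst (cc F s i m) = vv F (fst (oldpos s i m)) (snd (oldpos s i m))"
  unfolding cc_def oldpos_def zz_def using vv_inf by (auto simp: Let_def)

lemma snd_cc_lt: "\<not> (i = 0 \<and> m = 0) \<Longrightarrow> snd (cc F s i m) < p"
  unfolding cc_def zz_def using p2 by auto

lemma cc_inj:
  assumes F: "F \<in> FF" and s: "s < p"
  shows "inj_on (\<lambda>(i,m). cc F s i m) (cycles_verts ts')"
proof (rule inj_onI, clarify)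
  fix i m i' m'
  assume A: "(i,m) \<in> cycles_verts ts'" "(i',m') \<in> cycles_verts ts'" and E: "cc F s i m = cc F s i' m'"
  have "vv F (fst (oldpos s i m)) (snd (oldpos s i m)) = vv F (fst (oldpos s i' m')) (snd (oldpos s i' m'))"
    using E fst_cc[OF F] by metis
  then have op: "oldpos s i m = oldpos s i' m'"
    using vv_inj[OF F] oldpos_cv[OF A(1), of s] oldpos_cv[OF A(2), of s]
    by (metis prod.collapse)
  have sn: "snd (cc F s i m) = snd (cc F s i' m')" using E by simp
  show "i = i' \<and> m = m'"
  proof (cases "i = 0")
    case True
    then have i': "i' = 0" using op fst_oldpos_0 by metis
    show ?thesis
    proof (cases "m = 0")
      case True then show ?thesis using op oldpos_00 \<open>i = 0\<close> i' by metis
    next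
      case False
      then have m': "m' \<noteq> 0" using op oldpos_00 \<open>i = 0\<close> i' by metis
      define j where "j = (m-1) div (a-1)"
      define q where "q = (m-1) mod (a-1)"
      define j' where "j' = (m'-1) div (a-1)"
      define q' where "q' = (m'-1) mod (a-1)"
      have mb: "m < p * (a-1) + 1" "m' < p * (a-1) + 1" using A True i' by (auto simp: cv'_iff ts'0)
      have jb: "j < p" "j' < p" "q \<le> a - 2" "q' \<le> a - 2"
        using jq_bounds[OF _ mb(1)] jq_bounds[OF _ mb(2)] False m' unfolding j_def q_def j'_def q'_def by auto
      have P: "posn s j q = posn s j' q'"
        using op True i' False m' unfolding oldpos_def j_def q_def j'_def q'_def by simp
      have "(s + h j + s * (posn s j q mod 2)) mod p = (s + h j' + s * (posn s j' q' mod 2)) mod p"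
        using sn True i' False m' unfolding cc_def zz_def j_def q_def j'_def q'_def by (simp add: Let_def)
      then have "(h j + (s + s * (posn s j q mod 2))) mod p = (h j' + (s + s * (posn s j q mod 2))) mod p"
        using P by (simp add: ac_simps)
      then have "h j mod p = h j' mod p" by (rule mod_add_cancel_nat)
      then have "h j = h j'" using h_lt jb by simp
      then have jj: "j = j'" using h_inj jb by blast
      then have qq: "q = q'" using P jb unfolding posn_def by (auto split: if_splits)
      have "m - 1 = j * (a-1) + q" "m' - 1 = j' * (a-1) + q'"
        unfolding j_def q_def j'_def q'_def by (metis div_mult_mod_eq)+
      then have "m = m'" using jj qq False m' by simp
      then show ?thesis using True i' by simp
    qed
  next
    case False
    then have i': "i' \<noteq> 0" using op fst_oldpos_0 by metis
    have d: "(i-1) div p = (i'-1) div p" and mm: "m = m'"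
      using op False i' unfolding oldpos_def by auto
    have "((i-1) mod p + s * pot ((i-1) div p + 1) m) mod p = ((i'-1) mod p + s * pot ((i-1) div p + 1) m) mod p"
      using sn False i' d mm unfolding cc_def by (simp add: Let_def)
    then have "(i-1) mod p mod p = (i'-1) mod p mod p" by (rule mod_add_cancel_nat)
    then have "(i-1) mod p = (i'-1) mod p" by simp
    then have "i - 1 = i' - 1" using d by (metis div_mult_mod_eq)
    then show ?thesis using False i' mm by simp
  qed
qed

lemma cc_into:
  assumes F: "F \<in> FF"
  shows "(\<lambda>(i,m). cc F s i m) ` cycles_verts ts' \<subseteq> V'"
proof -
  have "cc F s i m \<in> V'" if A: "(i,m) \<in> cycles_verts ts'" for i m
  proof (cases "i = 0 \<and> m = 0")
    case True then show ?thesis unfolding cc_def V'_def by simp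
  next
    case False
    have "fst (cc F s i m) \<in> V" using fst_cc[OF F] vv_in[OF F] oldpos_cv[OF A] by (metis prod.collapse)
    moreover have "fst (cc F s i m) \<noteq> inf"
      using fst_cc[OF F] vv_ne_inf[OF F] oldpos_cv[OF A] oldpos_00 False by (metis prod.collapse)
    moreover have "snd (cc F s i m) < p" using snd_cc_lt False by blast
    ultimately show ?thesis unfolding V'_def by (metis DiffI insertCI lessThan_iff mem_Sigma_iff prod.collapse singletonD)
  qed
  then show ?thesis by auto
qed

lemma cc_image:
  assumes F: "F \<in> FF" and s: "s < p"
  shows "(\<lambda>(i,m). cc F s i m) ` cycles_verts ts' = V'"
proof (rule card_subset_eq[OF finite_V' cc_into[OF F]])
  show "card ((\<lambda>(i,m). cc F s i m) ` cycles_verts ts') = card V'"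
    using card_image[OF cc_inj[OF F s]] card_cycles_verts card_V'_sum[OF F] by simp
qed

lemma newF_iso: "F \<in> FF \<Longrightarrow> s < p \<Longrightarrow> iso_cycles V' (newF F s) ts'"
  unfolding newF_def using cyc_edges_iso[OF cc_inj cc_image ge3'] by blast

lemma newF_card: "F \<in> FF \<Longrightarrow> s < p \<Longrightarrow> card (newF F s) = card V'"
  unfolding newF_def using cyc_edges_card[OF cc_inj ge3'] card_V'_sum by simp

lemma newF_sub: "F \<in> FF \<Longrightarrow> s < p \<Longrightarrow> newF F s \<subseteq> complete_edges V'"
  using newF_iso unfolding iso_cycles_def iso_cycles_via_def by blast

end


context constr
begin

definition uu :: "'v set set \<Rightarrow> 'v" where "uu F = vv F 0 1"
definition ww :: "'v set set \<Rightarrow> 'v" where "ww F = vv F 0 (a - 1)"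

definition Icond :: "'v set set \<Rightarrow> 'v \<Rightarrow> nat \<Rightarrow> nat \<Rightarrow> bool" where
  "Icond F x l s \<longleftrightarrow> (if p = 2 then s = (if x = uu F then 0 else 1)
     else l mod p = (s * (1 + Phi F x) + (if x = uu F then 0 else h (p-1))) mod p)"

definition Vcond :: "'v set set \<Rightarrow> 'v \<Rightarrow> nat \<Rightarrow> nat \<Rightarrow> nat \<Rightarrow> bool" where
  "Vcond F x l1 l2 s \<longleftrightarrow> (if p = 2 then s = (if x = uu F then 1 else 0)
     else (l1 + l2) mod p = (2 * s * (1 + Phi F x) + (if x = uu F then 0 else 1)) mod p)"

definition CrossE :: "'v set set \<Rightarrow> nat \<Rightarrow> ('v \<times> nat) set \<Rightarrow> bool" where
  "CrossE F s e \<longleftrightarrow> (\<exists>x y K. e = {(x, (K + s * Phi F x) mod p), (y, (K + s * Phi F y) mod p)} \<and>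
     {x,y} \<in> F \<and> x \<noteq> inf \<and> y \<noteq> inf \<and> x \<noteq> y \<and> Phi F x \<noteq> Phi F y)"

definition InfE :: "'v set set \<Rightarrow> nat \<Rightarrow> ('v \<times> nat) set \<Rightarrow> bool" where
  "InfE F s e \<longleftrightarrow> (\<exists>x l. e = {(inf, 0), (x, l)} \<and> (x = uu F \<or> x = ww F) \<and> Icond F x l s)"

definition VertE :: "'v set set \<Rightarrow> nat \<Rightarrow> ('v \<times> nat) set \<Rightarrow> bool" where
  "VertE F s e \<longleftrightarrow> (\<exists>x l1 l2. e = {(x, l1), (x, l2)} \<and> l1 \<noteq> l2 \<and> (x = uu F \<or> x = ww F) \<and> Vcond F x l1 l2 s)"

lemma InfE_intro: "x = uu F \<or> x = ww F \<Longrightarrow> Icond F x l s \<Longrightarrow> InfE F s {(inf,0),(x,l)}"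
  unfolding InfE_def by (intro exI[of _ x] exI[of _ l]) simp

lemma InfE_intro': "x = uu F \<or> x = ww F \<Longrightarrow> Icond F x l s \<Longrightarrow> InfE F s {(x,l),(inf,0)}"
  unfolding InfE_def by (intro exI[of _ x] exI[of _ l]) (simp add: insert_commute)

lemma VertE_intro: "l1 \<noteq> l2 \<Longrightarrow> x = uu F \<or> x = ww F \<Longrightarrow> Vcond F x l1 l2 s \<Longrightarrow> VertE F s {(x,l1),(x,l2)}"
  unfolding VertE_def by (intro exI[of _ x] exI[of _ l1] exI[of _ l2]) simp

lemma a2s: "a - 2 + 1 = a - 1" "Suc (a - 2) = a - 1" using a3 by linarith+

lemma cv0: "j < a \<Longrightarrow> (0,j) \<in> cycles_verts ts" using ts_ne by (simp add: cv_iff)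

lemma uu_ne_ww: "F \<in> FF \<Longrightarrow> uu F \<noteq> ww F"
  unfolding uu_def ww_def using vv_inj[of F 0 1 0 "a-1"] cv0 a3 by auto

lemma Phi_uu: "F \<in> FF \<Longrightarrow> Phi F (uu F) = 0"
  unfolding uu_def using Phi_vv cv0 a3 by (simp add: pot_def)

lemma Phi_ww: "Phi F (ww F) = (a - 2) mod 2" if "F \<in> FF"
proof -
  have "a - 1 < a" using a3 by simp
  then have "Phi F (ww F) = (a - 1 - 1) mod 2" unfolding ww_def using Phi_vv cv0 a3 that by (simp add: pot_def)
  then show ?thesis by (simp add: numeral_2_eq_2)
qed

lemma zz_form:
  assumes F: "F \<in> FF" and q: "q \<le> a - 2"
  shows "zz F s j q = (vv F 0 (posn s j q + 1), ((s + h j) + s * Phi F (vv F 0 (posn s j q + 1))) mod p)"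
proof -
  have "posn s j q + 1 < a" using posn_le[OF q, of s j] a3 by linarith
  then have "Phi F (vv F 0 (posn s j q + 1)) = posn s j q mod 2" using Phi_vv[OF F cv0] by (simp add: pot_def)
  then show ?thesis unfolding zz_def by simp
qed

lemma cc0: "0 < m \<Longrightarrow> cc F s 0 m = zz F s ((m-1) div (a-1)) ((m-1) mod (a-1))"
  unfolding cc_def by simp

lemma vv0_ne_inf: "F \<in> FF \<Longrightarrow> P < a - 1 \<Longrightarrow> vv F 0 (P + 1) \<noteq> inf"
  using vv_ne_inf cv0 by simp

lemma class_pos:
  assumes F: "F \<in> FF" and i: "0 < i" "i < length ts'" and m: "m < ts'!i"
  shows "CrossE F s {cc F s i m, cc F s i ((m+1) mod ts'!i)}"
proof -
  define \<iota> where "\<iota> = (i-1) div p + 1"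
  define k where "k = (i-1) mod p"
  have il: "\<iota> < length ts" unfolding \<iota>_def using idx_lt i by simp
  have t: "ts'!i = ts!\<iota>" unfolding \<iota>_def using ts'_nth i by simp
  have t3: "3 \<le> ts!\<iota>" using ts_ge il by simp
  have i0: "\<iota> \<noteq> 0" unfolding \<iota>_def by simp
  let ?m = "(m+1) mod ts!\<iota>"
  have c1: "(\<iota>, m) \<in> cycles_verts ts" "(\<iota>, ?m) \<in> cycles_verts ts" using m t il t3 by (auto simp: cv_iff)
  have e1: "cc F s i m = (vv F \<iota> m, (k + s * Phi F (vv F \<iota> m)) mod p)"
    using i c1 Phi_vv[OF F] unfolding cc_def \<iota>_def k_def by simp
  have e2: "cc F s i ((m+1) mod ts'!i) = (vv F \<iota> ?m, (k + s * Phi F (vv F \<iota> ?m)) mod p)"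
    using i c1 Phi_vv[OF F] t unfolding cc_def \<iota>_def k_def by simp
  have "?m \<noteq> m" using mod_suc_neq(1)[OF t3] m t by simp
  then have ne: "vv F \<iota> m \<noteq> vv F \<iota> ?m" using vv_inj[OF F c1] by auto
  have "pot \<iota> m \<noteq> pot \<iota> ?m" using pot_adj i0 il m t by simp
  then have "Phi F (vv F \<iota> m) \<noteq> Phi F (vv F \<iota> ?m)" using Phi_vv[OF F] c1 by simp
  moreover have "{vv F \<iota> m, vv F \<iota> ?m} \<in> F" using vv_edge[OF F c1(1)] .
  moreover have "vv F \<iota> m \<noteq> inf" "vv F \<iota> ?m \<noteq> inf" using vv_ne_inf[OF F] c1 i0 by auto
  ultimately show ?thesis unfolding CrossE_def e1 e2 using ne by blast
qed

lemma class_m0: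
  assumes F: "F \<in> FF" and s: "s < p"
  shows "InfE F s {cc F s 0 0, cc F s 0 ((0+1) mod ts'!0)}"
proof -
  have "0 < p * (a - 1)" using p2 a3 by simp
  then have L: "(0+1) mod ts'!0 = 1" unfolding ts'0 by simp
  have c: "cc F s 0 1 = zz F s 0 0" using cc0[of 1] by simp
  have z: "zz F s 0 0 = (vv F 0 (posn s 0 0 + 1), ((s + h 0) + s * Phi F (vv F 0 (posn s 0 0 + 1))) mod p)"
    using zz_form[OF F] by simp
  have h0: "h 0 = 0" unfolding h_def by simp
  have c00: "cc F s 0 0 = (inf, 0)" unfolding cc_def by simp
  show ?thesis
  proof (cases "flip s")
    case True
    then have p2': "p = 2" "s = 1" unfolding flip_def by auto
    have "posn s 0 0 = a - 2" unfolding posn_def fw_def using True by simp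
    then have x: "vv F 0 (posn s 0 0 + 1) = ww F" unfolding ww_def using a2s by simp
    show ?thesis unfolding L c z x c00
    proof (rule InfE_intro)
      show "Icond F (ww F) (((s + h 0) + s * Phi F (ww F)) mod p) s"
        unfolding Icond_def using uu_ne_ww[OF F] p2' by auto
    qed simp
  next
    case False
    have "posn s 0 0 = 0" unfolding posn_def fw_def using False by simp
    then have x: "vv F 0 (posn s 0 0 + 1) = uu F" unfolding uu_def by simp
    have "\<not> (p = 2 \<and> s = 1)" using False unfolding flip_def by simp
    then have "p = 2 \<Longrightarrow> s = 0" using s by auto
    show ?thesis unfolding L c z x c00
    proof (rule InfE_intro)
      show "Icond F (uu F) (((s + h 0) + s * Phi F (uu F)) mod p) s"
        unfolding Icond_def using Phi_uu[OF F] h0 \<open>p = 2 \<Longrightarrow> s = 0\<close> by auto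
    qed simp
  qed
qed

lemma CrossE_intro:
  "{x,y} \<in> F \<Longrightarrow> x \<noteq> inf \<Longrightarrow> y \<noteq> inf \<Longrightarrow> x \<noteq> y \<Longrightarrow> Phi F x \<noteq> Phi F y \<Longrightarrow>
   CrossE F s {(x, (K + s * Phi F x) mod p), (y, (K + s * Phi F y) mod p)}"
  unfolding CrossE_def by (intro exI[of _ x] exI[of _ y] exI[of _ K]) simp

lemma Phi_vv0: "F \<in> FF \<Longrightarrow> P < a - 1 \<Longrightarrow> Phi F (vv F 0 (P + 1)) = P mod 2"
  using Phi_vv cv0 by (simp add: pot_def)

lemma dm: "(q::nat) < d \<Longrightarrow> (j * d + q) div d = j" "(q::nat) < d \<Longrightarrow> (j * d + q) mod d = q"
  by simp_all

lemma par: "(n::nat) mod 2 \<noteq> Suc n mod 2" by presburger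

lemma L_pos: "0 < p * (a - 1)" using p2 a3 by simp

lemma class_last:
  assumes F: "F \<in> FF" and s: "s < p"
  shows "InfE F s {cc F s 0 (p * (a - 1)), cc F s 0 ((p * (a - 1) + 1) mod ts'!0)}"
proof -
  have c00: "cc F s 0 0 = (inf, 0)" unfolding cc_def by simp
  have L: "(p * (a - 1) + 1) mod ts'!0 = 0" unfolding ts'0 by simp
  have eq: "p * (a - 1) - 1 = (p - 1) * (a - 1) + (a - 2)"
  proof -
    obtain p' where "p = Suc p'" using p2 by (cases p) auto
    then show ?thesis using a3 by (simp add: algebra_simps)
  qed
  have a1: "a - 2 < a - 1" using a3 by simp
  have c: "cc F s 0 (p * (a - 1)) = zz F s (p - 1) (a - 2)"
    unfolding cc0[OF L_pos] eq dm[OF a1] ..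
  have z: "zz F s (p-1) (a-2) = (vv F 0 (posn s (p-1) (a-2) + 1), ((s + h (p-1)) + s * Phi F (vv F 0 (posn s (p-1) (a-2) + 1))) mod p)"
    using zz_form[OF F] by simp
  consider "p = 2" "s = 1" | "p = 2" "s = 0" | "odd p" using pcase s by (cases "p = 2") (auto, linarith)
  then show ?thesis
  proof cases
    case 1
    then have "posn s (p-1) (a-2) = a - 2" unfolding posn_def fw_def flip_def by simp
    then have x: "vv F 0 (posn s (p-1) (a-2) + 1) = ww F" unfolding ww_def using a2s by simp
    show ?thesis unfolding L c z x c00
    proof (rule InfE_intro')
      show "Icond F (ww F) (((s + h (p-1)) + s * Phi F (ww F)) mod p) s"
        unfolding Icond_def using uu_ne_ww[OF F] 1 by auto
    qed simp
  next
    case 2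
    then have "posn s (p-1) (a-2) = 0" unfolding posn_def fw_def flip_def by simp
    then have x: "vv F 0 (posn s (p-1) (a-2) + 1) = uu F" unfolding uu_def by simp
    show ?thesis unfolding L c z x c00
    proof (rule InfE_intro')
      show "Icond F (uu F) (((s + h (p-1)) + s * Phi F (uu F)) mod p) s"
        unfolding Icond_def using 2 by auto
    qed simp
  next
    case 3
    then have "\<not> flip s" "even (p - 1)" unfolding flip_def by auto
    then have "posn s (p-1) (a-2) = a - 2" unfolding posn_def fw_def by simp
    then have x: "vv F 0 (posn s (p-1) (a-2) + 1) = ww F" unfolding ww_def using a2s by simp
    show ?thesis unfolding L c z x c00
    proof (rule InfE_intro')
      show "Icond F (ww F) (((s + h (p-1)) + s * Phi F (ww F)) mod p) s"
        unfolding Icond_def using uu_ne_ww[OF F] 3 by (auto simp: algebra_simps)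
    qed simp
  qed
qed

lemma class_mid_cross:
  assumes F: "F \<in> FF" and s: "s < p" and m: "0 < m" "m + 1 < p * (a - 1) + 1"
    and q: "(m-1) mod (a-1) < a - 2"
  shows "CrossE F s {cc F s 0 m, cc F s 0 (m + 1)}"
proof -
  define j where "j = (m-1) div (a-1)"
  define q where "q = (m-1) mod (a-1)"
  have mq: "m = j * (a-1) + (q + 1)" unfolding j_def q_def using m by (metis add.assoc div_mult_mod_eq Suc_pred' Suc_eq_plus1)
  have q1: "q + 1 < a - 1" using q unfolding q_def by linarith
  have c1: "cc F s 0 m = zz F s j q" using cc0[OF m(1)] unfolding j_def q_def .
  have c2: "cc F s 0 (m+1) = zz F s j (q+1)"
  proof -
    have "cc F s 0 (m+1) = zz F s (m div (a-1)) (m mod (a-1))" using cc0[of "m+1"] by simp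
    then show ?thesis using mq dm[OF q1] by metis
  qed
  have qa: "q \<le> a - 2" "q + 1 \<le> a - 2" using q1 by linarith+
  define P where "P = posn s j q"
  define P' where "P' = posn s j (q+1)"
  have PP: "(P' = P + 1 \<and> P + 1 \<le> a - 2) \<or> (P = P' + 1 \<and> P' + 1 \<le> a - 2)"
    unfolding P_def P'_def posn_def using qa by auto
  have Pb: "P < a - 1" "P' < a - 1" using PP by linarith+
  let ?x = "vv F 0 (P + 1)" and ?y = "vv F 0 (P' + 1)"
  have z1: "zz F s j q = (?x, ((s + h j) + s * Phi F ?x) mod p)" using zz_form[OF F qa(1)] unfolding P_def .
  have z2: "zz F s j (q+1) = (?y, ((s + h j) + s * Phi F ?y) mod p)" using zz_form[OF F qa(2)] unfolding P'_def .
  have cvs: "(0, P+1) \<in> cycles_verts ts" "(0, P'+1) \<in> cycles_verts ts" using Pb cv0 by auto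
  have edge: "{?x, ?y} \<in> F"
  proof (cases "P' = P + 1")
    case True
    have "(P + 1 + 1) mod a = P' + 1" using True Pb by simp
    then show ?thesis using vv_edge[OF F cvs(1)] ts_ne True by simp
  next
    case False
    then have "P = P' + 1" using PP by simp
    moreover have "(P' + 1 + 1) mod a = P + 1" using \<open>P = P' + 1\<close> Pb by simp
    ultimately show ?thesis using vv_edge[OF F cvs(2)] by (simp add: insert_commute)
  qed
  have ne: "?x \<noteq> ?y" using vv_inj[OF F cvs] PP by auto
  have ph: "Phi F ?x \<noteq> Phi F ?y" using Phi_vv0[OF F Pb(1)] Phi_vv0[OF F Pb(2)] PP par by (metis Suc_eq_plus1)
  show ?thesis unfolding c1 c2 z1 z2
    by (rule CrossE_intro[OF edge vv0_ne_inf[OF F Pb(1)] vv0_ne_inf[OF F Pb(2)] ne ph])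
qed

lemma class_mid_vert:
  assumes F: "F \<in> FF" and s: "s < p" and m: "0 < m" "m + 1 < p * (a - 1) + 1"
    and q: "(m-1) mod (a-1) = a - 2"
  shows "VertE F s {cc F s 0 m, cc F s 0 (m + 1)}"
proof -
  define j where "j = (m-1) div (a-1)"
  have a1: "0 < a - 1" "a - 2 < a - 1" using a3 by auto
  have mq: "m = (j + 1) * (a-1) + 0"
  proof -
    have "m - 1 = j * (a-1) + (a - 2)" unfolding j_def using q by (metis div_mult_mod_eq)
    then have "m = j * (a-1) + (a - 2 + 1)" using m by linarith
    then show ?thesis unfolding a2s(1) by simp
  qed
  have c1: "cc F s 0 m = zz F s j (a-2)" using cc0[OF m(1)] q unfolding j_def by simp
  have c2: "cc F s 0 (m+1) = zz F s (j+1) 0"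
  proof -
    have "cc F s 0 (m+1) = zz F s (m div (a-1)) (m mod (a-1))" using cc0[of "m+1"] by simp
    then show ?thesis using mq dm[OF a1(1)] by metis
  qed
  have jp: "j + 1 < p"
  proof -
    have "(j+1) * (a-1) < p * (a-1)" using mq m by simp
    then show ?thesis using mult_less_cancel2 by blast
  qed
  have fwj: "fw s (j+1) = (\<not> fw s j)" unfolding fw_def by simp
  define P where "P = posn s j (a-2)"
  have P2: "posn s (j+1) 0 = P" unfolding P_def posn_def fwj by simp
  have Pv: "P = (if fw s j then a - 2 else 0)" unfolding P_def posn_def by simp
  have Pb: "P < a - 1" using Pv a3 by auto
  let ?x = "vv F 0 (P + 1)"
  have z1: "zz F s j (a-2) = (?x, ((s + h j) + s * Phi F ?x) mod p)" using zz_form[OF F, of "a-2"] unfolding P_def by simp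
  have z2: "zz F s (j+1) 0 = (?x, ((s + h (j+1)) + s * Phi F ?x) mod p)" using zz_form[OF F, of 0 s "j+1"] P2 by simp
  have hlt: "h j < p" "h (j+1) < p" using h_lt jp by auto
  have l_ne: "((s + h j) + s * Phi F ?x) mod p \<noteq> ((s + h (j+1)) + s * Phi F ?x) mod p"
  proof
    assume "((s + h j) + s * Phi F ?x) mod p = ((s + h (j+1)) + s * Phi F ?x) mod p"
    then have "(h j + (s + s * Phi F ?x)) mod p = (h (j+1) + (s + s * Phi F ?x)) mod p" by (simp add: ac_simps)
    then have "h j mod p = h (j+1) mod p" by (rule mod_add_cancel_nat)
    then have "h j = h (j+1)" using hlt by simp
    then show False using h_inj[of j "j+1"] jp by simp
  qed
  have xw: "fw s j \<Longrightarrow> ?x = ww F" unfolding Pv ww_def using a2s by simp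
  have xu: "\<not> fw s j \<Longrightarrow> ?x = uu F" unfolding Pv uu_def by simp
  have xuw: "?x = uu F \<or> ?x = ww F" using xw xu by blast
  have V: "Vcond F ?x (((s + h j) + s * Phi F ?x) mod p) (((s + h (j+1)) + s * Phi F ?x) mod p) s"
  proof (cases "p = 2")
    case True
    then have j0: "j = 0" using jp by simp
    have "s = 0 \<or> s = 1" using s True by auto
    then show ?thesis
    proof
      assume s0: "s = 0"
      then have "fw s j" unfolding fw_def flip_def j0 by simp
      then show ?thesis unfolding Vcond_def using xw uu_ne_ww[OF F] s0 True by auto
    next
      assume s1: "s = 1"
      then have "\<not> fw s j" unfolding fw_def flip_def j0 using True by simp
      then show ?thesis unfolding Vcond_def using xu s1 True by auto
    qed
  next
    case False
    then have op: "odd p" using pcase by auto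
    have nf: "\<not> flip s" unfolding flip_def using False by simp
    have hs: "(h j + h (j+1)) mod p = (if even j then 1 else 0)" using h_sum_odd[OF op jp] .
    have delta: "(if ?x = uu F then 0 else 1) = (if even j then (1::nat) else 0)"
    proof (cases "even j")
      case True
      then have "fw s j" unfolding fw_def using nf by simp
      then show ?thesis using xw uu_ne_ww[OF F] True by simp
    next
      case False
      then have "\<not> fw s j" unfolding fw_def using nf by simp
      then show ?thesis using xu False by simp
    qed
    have "(((s + h j) + s * Phi F ?x) mod p + ((s + h (j+1)) + s * Phi F ?x) mod p) mod p
        = (2 * s * (1 + Phi F ?x) + (h j + h (j+1))) mod p"
    proof -
      have "((s + h j) + s * Phi F ?x) + ((s + h (j+1)) + s * Phi F ?x) = 2 * s * (1 + Phi F ?x) + (h j + h (j+1))"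
        by (simp add: algebra_simps mult_2 mult_2_right)
      then show ?thesis by (simp only: mod_add_eq)
    qed
    also have "\<dots> = (2 * s * (1 + Phi F ?x) + (h j + h (j+1)) mod p) mod p"
      by (simp add: mod_add_right_eq)
    also have "\<dots> = (2 * s * (1 + Phi F ?x) + (if ?x = uu F then 0 else 1)) mod p"
      unfolding hs delta ..
    finally show ?thesis unfolding Vcond_def using False by simp
  qed
  show ?thesis unfolding c1 c2 z1 z2 by (rule VertE_intro[OF l_ne xuw V])
qed

lemma classify:
  assumes F: "F \<in> FF" and s: "s < p" and e: "e \<in> newF F s"
  shows "CrossE F s e \<or> InfE F s e \<or> VertE F s e"
proof -
  obtain i m where im: "i < length ts'" "m < ts'!i" and e: "e = {cc F s i m, cc F s i ((m+1) mod ts'!i)}"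
    using e unfolding newF_def cyc_edges_def by blast
  show ?thesis
  proof (cases "i = 0")
    case False
    then show ?thesis using class_pos[OF F _ im(1) im(2)] e by simp
  next
    case True
    have mL: "m < p * (a-1) + 1" using im True ts'0 by simp
    consider "m = 0" | "m = p * (a - 1)" | "0 < m" "m + 1 < p * (a-1) + 1" using mL by linarith
    then show ?thesis
    proof cases
      case 1 then show ?thesis using class_m0[OF F s] e True by simp
    next
      case 2 then show ?thesis using class_last[OF F s] e True by simp
    next
      case 3
      have md: "(m+1) mod ts'!i = m + 1" using 3 True ts'0 by simp
      have "(m-1) mod (a-1) \<le> a - 2" using jq_bounds[OF 3(1) mL] by simp
      then consider "(m-1) mod (a-1) < a - 2" | "(m-1) mod (a-1) = a - 2" by linarith
      then show ?thesis
      proof cases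
        case 1 then show ?thesis using class_mid_cross[OF F s 3] e True md by simp
      next
        case 2 then show ?thesis using class_mid_vert[OF F s 3] e True md by simp
      qed
    qed
  qed
qed

end


lemma key_arith:
  fixes p s s' :: nat and c :: int
  assumes d: "int p dvd (int s - int s') * c" and cp: "coprime (int p) c" and s: "s < p" "s' < p"
  shows "s = s'"
proof (rule ccontr)
  assume ne: "s \<noteq> s'"
  have "int p dvd (int s - int s')" using d cp coprime_dvd_mult_left_iff by blast
  moreover have "int s - int s' \<noteq> 0" using ne by simp
  ultimately have "\<bar>int p\<bar> \<le> \<bar>int s - int s'\<bar>" using dvd_imp_le_int by blast
  then show False using s by linarith
qed

lemma mod_eq_int_dvd: "(x::nat) mod p = y mod p \<Longrightarrow> int p dvd int x - int y"
  by (metis mod_eq_dvd_iff of_nat_mod)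

lemma coprime_small:
  fixes p :: nat and c :: int
  assumes "c = 1 \<or> c = -1 \<or> ((c = 2 \<or> c = -2) \<and> odd p)"
  shows "coprime (int p) c"
  using assms by (auto simp: coprime_right_2_iff_odd)

context constr
begin

lemma Phi_le: "F \<in> FF \<Longrightarrow> x \<in> V \<Longrightarrow> Phi F x \<le> 2 \<and> (p = 2 \<longrightarrow> Phi F x \<le> 1)"
proof -
  assume F: "F \<in> FF" and x: "x \<in> V"
  obtain i j where ij: "fm F x = (i,j)" by force
  have "(i,j) \<in> cycles_verts ts" using bijF[OF F] x ij by (metis bij_betwE)
  then have "i < length ts" by (simp add: cv_iff)
  then show ?thesis unfolding Phi_def ij using pot_le pot_le1[of i j] by (cases "i = 0") (auto simp: pot_def)
qed

lemma F_sub: "F \<in> FF \<Longrightarrow> F \<subseteq> complete_edges V"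
  using fmF unfolding iso_cycles_via_def by blast

lemma edge_in_V: "F \<in> FF \<Longrightarrow> {x,y} \<in> F \<Longrightarrow> x \<in> V \<and> y \<in> V"
  using F_sub complete_edges_Pow by blast

lemma uu_ww_ne_inf: "F \<in> FF \<Longrightarrow> uu F \<noteq> inf \<and> ww F \<noteq> inf"
  unfolding uu_def ww_def using vv_ne_inf cv0 a3 by auto

lemma inf_edges: "F \<in> FF \<Longrightarrow> {inf, uu F} \<in> F \<and> {inf, ww F} \<in> F"
proof -
  assume F: "F \<in> FF"
  have "{vv F 0 0, vv F 0 ((0+1) mod a)} \<in> F" using vv_edge[OF F cv00] by simp
  moreover have "(0+1) mod a = 1" using a3 by simp
  moreover have "{vv F 0 (a-1), vv F 0 ((a - 1 + 1) mod a)} \<in> F" using vv_edge[OF F cv0, of "a-1"] a3 by simp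
  moreover have "(a - 1 + 1) mod a = 0" using a3 by simp
  ultimately show ?thesis using vv_inf[OF F] unfolding uu_def ww_def by (simp add: insert_commute)
qed

lemma Phi_uw_le1: "F \<in> FF \<Longrightarrow> x = uu F \<or> x = ww F \<Longrightarrow> Phi F x \<le> 1"
  using Phi_uu Phi_ww by auto

lemma same_F:
  assumes F: "F \<in> FF" and s: "s < p" "s' < p" and e: "e \<in> newF F s" "e \<in> newF F s'"
  shows "s = s'"
proof -
  have c1: "CrossE F s e \<or> InfE F s e \<or> VertE F s e" using classify[OF F s(1) e(1)] .
  have c2: "CrossE F s' e \<or> InfE F s' e \<or> VertE F s' e" using classify[OF F s(2) e(2)] .
  have uwi: "uu F \<noteq> inf" "ww F \<noteq> inf" using uu_ww_ne_inf[OF F] by auto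
  have op_or: "odd p \<or> p = 2" using pcase by auto
  have noinfC: "(inf,0) \<notin> e" if "CrossE F t e" for t using that unfolding CrossE_def by auto
  have noinfV: "(inf,0) \<notin> e" if "VertE F t e" for t using that uwi unfolding VertE_def by auto
  have infI: "(inf,0) \<in> e" if "InfE F t e" for t using that unfolding InfE_def by auto
  have CV: False if C: "CrossE F t e" and W: "VertE F t' e" for t t'
  proof -
    obtain x y A B where "e = {(x,A),(y,B)}" "x \<noteq> y" using C unfolding CrossE_def by blast
    moreover obtain z l1 l2 where "e = {(z,l1),(z,l2)}" using W unfolding VertE_def by blast
    ultimately show False by (metis doubleton_eq_iff prod.inject)
  qed
  show ?thesis
  proof -
    {
      assume C: "CrossE F s e" "CrossE F s' e"
      obtain x y K where X: "e = {(x, (K + s * Phi F x) mod p), (y, (K + s * Phi F y) mod p)}"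
        "{x,y} \<in> F" "x \<noteq> y" "Phi F x \<noteq> Phi F y" using C(1) unfolding CrossE_def by blast
      obtain x' y' K' where X': "e = {(x', (K' + s' * Phi F x') mod p), (y', (K' + s' * Phi F y') mod p)}"
        using C(2) unfolding CrossE_def by blast
      have eqs: "(K + s * Phi F x) mod p = (K' + s' * Phi F x) mod p \<and> (K + s * Phi F y) mod p = (K' + s' * Phi F y) mod p"
        using X(1) X' X(3) by (auto simp: doubleton_eq_iff)
      have xyV: "x \<in> V" "y \<in> V" using edge_in_V[OF F X(2)] by auto
      have d1: "int p dvd int (K + s * Phi F x) - int (K' + s' * Phi F x)" using eqs mod_eq_int_dvd by blast
      have d2: "int p dvd int (K + s * Phi F y) - int (K' + s' * Phi F y)" using eqs mod_eq_int_dvd by blast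
      have "int p dvd (int (K + s * Phi F x) - int (K' + s' * Phi F x)) - (int (K + s * Phi F y) - int (K' + s' * Phi F y))"
        using d1 d2 by (rule dvd_diff)
      also have "(int (K + s * Phi F x) - int (K' + s' * Phi F x)) - (int (K + s * Phi F y) - int (K' + s' * Phi F y))
          = (int s - int s') * (int (Phi F x) - int (Phi F y))" by (simp add: algebra_simps)
      finally have d: "int p dvd (int s - int s') * (int (Phi F x) - int (Phi F y))" .
      have "coprime (int p) (int (Phi F x) - int (Phi F y))"
      proof (rule coprime_small)
        show "int (Phi F x) - int (Phi F y) = 1 \<or> int (Phi F x) - int (Phi F y) = - 1 \<or>
          ((int (Phi F x) - int (Phi F y) = 2 \<or> int (Phi F x) - int (Phi F y) = - 2) \<and> odd p)"
          using Phi_le[OF F xyV(1)] Phi_le[OF F xyV(2)] X(4) op_or by auto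
      qed
      then have "s = s'" using key_arith[OF d _ s] by simp
    }
    moreover {
      assume I: "InfE F s e" "InfE F s' e"
      obtain x l where X: "e = {(inf,0),(x,l)}" "x = uu F \<or> x = ww F" "Icond F x l s" using I(1) unfolding InfE_def by blast
      obtain x' l' where X': "e = {(inf,0),(x',l')}" "Icond F x' l' s'" using I(2) unfolding InfE_def by blast
      have xi: "x \<noteq> inf" using X(2) uwi by auto
      have "x' = x \<and> l' = l" using X(1) X'(1) xi by (auto simp: doubleton_eq_iff)
      then have I2: "Icond F x l s'" using X'(2) by simp
      have "s = s'"
      proof (cases "p = 2")
        case True then show ?thesis using X(3) I2 unfolding Icond_def by auto
      next
        case False
        then have op: "odd p" using op_or by auto
        let ?H = "if x = uu F then 0 else h (p-1)"
        have "(s * (1 + Phi F x) + ?H) mod p = (s' * (1 + Phi F x) + ?H) mod p"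
          using X(3) I2 False unfolding Icond_def by simp
        then have "int p dvd int (s * (1 + Phi F x) + ?H) - int (s' * (1 + Phi F x) + ?H)" by (rule mod_eq_int_dvd)
        also have "int (s * (1 + Phi F x) + ?H) - int (s' * (1 + Phi F x) + ?H) = (int s - int s') * (1 + int (Phi F x))"
          by (simp add: algebra_simps)
        finally have d: "int p dvd (int s - int s') * (1 + int (Phi F x))" .
        have "coprime (int p) (1 + int (Phi F x))"
          using coprime_small[of "1 + int (Phi F x)" p] Phi_uw_le1[OF F X(2)] op by (cases "Phi F x = 0") auto
        then show ?thesis using key_arith[OF d _ s] by simp
      qed
    }
    moreover {
      assume W: "VertE F s e" "VertE F s' e"
      obtain x l1 l2 where X: "e = {(x,l1),(x,l2)}" "x = uu F \<or> x = ww F" "Vcond F x l1 l2 s" "l1 \<noteq> l2"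
        using W(1) unfolding VertE_def by blast
      obtain x' l1' l2' where X': "e = {(x',l1'),(x',l2')}" "Vcond F x' l1' l2' s'" using W(2) unfolding VertE_def by blast
      have "x' = x \<and> l1' + l2' = l1 + l2" using X(1) X'(1) X(4) by (auto simp: doubleton_eq_iff)
      then have "x' = x" "l1' + l2' = l1 + l2" by auto
      then have W2: "Vcond F x l1 l2 s'" using X'(2) unfolding Vcond_def by metis
      have "s = s'"
      proof (cases "p = 2")
        case True then show ?thesis using X(3) W2 unfolding Vcond_def by auto
      next
        case False
        then have op: "odd p" using op_or by auto
        let ?H = "if x = uu F then 0 else 1::nat"
        have "(2 * s * (1 + Phi F x) + ?H) mod p = (2 * s' * (1 + Phi F x) + ?H) mod p"
          using X(3) W2 False unfolding Vcond_def by simp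
        then have "int p dvd int (2 * s * (1 + Phi F x) + ?H) - int (2 * s' * (1 + Phi F x) + ?H)" by (rule mod_eq_int_dvd)
        also have "int (2 * s * (1 + Phi F x) + ?H) - int (2 * s' * (1 + Phi F x) + ?H) = (int s - int s') * (2 * (1 + int (Phi F x)))"
          by (simp add: algebra_simps)
        finally have d: "int p dvd (int s - int s') * (2 * (1 + int (Phi F x)))" .
        have c2: "coprime (int p) 2" using coprime_small[of 2 p] op by simp
        have "coprime (int p) (1 + int (Phi F x))"
          using coprime_small[of "1 + int (Phi F x)" p] Phi_uw_le1[OF F X(2)] op by (cases "Phi F x = 0") auto
        then have "coprime (int p) (2 * (1 + int (Phi F x)))" using c2 by (simp only: coprime_mult_right_iff)
        then show ?thesis using key_arith[OF d _ s] by simp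
      qed
    }
    ultimately show ?thesis using c1 c2 noinfC noinfV infI CV by blast
  qed
qed

end


context constr
begin

definition old :: "('v \<times> nat) set \<Rightarrow> 'v set" where
  "old e = (if card (fst ` e) = 2 then fst ` e else insert inf (fst ` e))"

lemma old_edge:
  assumes F: "F \<in> FF" and s: "s < p" and e: "e \<in> newF F s"
  shows "old e \<in> F"
proof -
  have uwi: "uu F \<noteq> inf" "ww F \<noteq> inf" using uu_ww_ne_inf[OF F] by auto
  have ie: "{inf, uu F} \<in> F" "{inf, ww F} \<in> F" using inf_edges[OF F] by auto
  consider "CrossE F s e" | "InfE F s e" | "VertE F s e" using classify[OF F s e] by blast
  then show ?thesis
  proof cases
    case 1
    then obtain x y A B where X: "e = {(x,A),(y,B)}" "{x,y} \<in> F" "x \<noteq> y"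
      unfolding CrossE_def by blast
    then have "fst ` e = {x,y}" by simp
    then show ?thesis unfolding old_def using X by simp
  next
    case 2
    then obtain x l where X: "e = {(inf,0),(x,l)}" "x = uu F \<or> x = ww F"
      unfolding InfE_def by blast
    then have "x \<noteq> inf" using uwi by auto
    moreover have "fst ` e = {inf, x}" using X by simp
    ultimately show ?thesis unfolding old_def using X ie by auto
  next
    case 3
    then obtain x l1 l2 where X: "e = {(x,l1),(x,l2)}" "x = uu F \<or> x = ww F"
      unfolding VertE_def by blast
    have "fst ` e = {x}" using X by simp
    then show ?thesis unfolding old_def using X ie by auto
  qed
qed

lemma newF_disj:
  assumes F: "F \<in> FF" "F' \<in> FF" and s: "s < p" "s' < p" and ne: "(F,s) \<noteq> (F',s')"
  shows "newF F s \<inter> newF F' s' = {}"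
proof (rule ccontr)
  assume "newF F s \<inter> newF F' s' \<noteq> {}"
  then obtain e where e: "e \<in> newF F s" "e \<in> newF F' s'" by blast
  have "old e \<in> F" "old e \<in> F'" using old_edge F s e by auto
  then have "F = F'" using part F unfolding edge_partition_def by blast
  then show False using same_F[OF F(1) s] e ne by auto
qed

lemma card_F: assumes F: "F \<in> FF" shows "card F = card V"
proof -
  have inj: "inj_on (\<lambda>e. fm F ` e) F"
  proof -
    have "inj_on (fm F) V" using bijF[OF F] by (simp add: bij_betw_def)
    then have "inj_on (\<lambda>e. fm F ` e) (Pow V)" by (rule inj_on_image_Pow)
    moreover have "F \<subseteq> Pow V" using F_sub[OF F] complete_edges_Pow by blast
    ultimately show ?thesis using inj_on_subset by blast
  qed
  have "card F = card ((\<lambda>e. fm F ` e) ` F)" using card_image[OF inj] by simp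
  also have "\<dots> = card (cycles_graph ts)" using fmF[OF F] unfolding iso_cycles_via_def by simp
  also have "\<dots> = sum_list ts" using card_cycles_graph ge3 by simp
  finally show ?thesis using card_V[OF F] by simp
qed

lemma finite_FF: "finite FF"
proof -
  have "FF \<subseteq> Pow (complete_edges V)" using part unfolding edge_partition_def by auto
  then show ?thesis using finite_complete_edges[OF finV] finite_subset by blast
qed

lemma card_FF: "card FF * card V = card (complete_edges V)"
proof -
  have "card (\<Union>F\<in>FF. F) = (\<Sum>F\<in>FF. card F)"
  proof (rule card_UN_disjoint[OF finite_FF])
    show "\<forall>F\<in>FF. finite F"
      using F_sub finite_complete_edges[OF finV] finite_subset by blast
    show "\<forall>F\<in>FF. \<forall>G\<in>FF. F \<noteq> G \<longrightarrow> F \<inter> G = {}" using part unfolding edge_partition_def by blast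
  qed
  also have "\<dots> = card FF * card V" using card_F by simp
  finally show ?thesis using part unfolding edge_partition_def by simp
qed

definition FF' :: "('v \<times> nat) set set set" where
  "FF' = (\<lambda>(F,s). newF F s) ` (FF \<times> {..<p})"

lemma main:
  assumes FFne: "FF \<noteq> {}"
  shows "OP_solvable ts'"
proof -
  obtain F0 where F0: "F0 \<in> FF" using FFne by blast
  let ?I = "FF \<times> {..<p}"
  have finI: "finite ?I" using finite_FF by simp
  have disj: "\<forall>i\<in>?I. \<forall>j\<in>?I. i \<noteq> j \<longrightarrow> (case i of (F,s) \<Rightarrow> newF F s) \<inter> (case j of (F,s) \<Rightarrow> newF F s) = {}"
    using newF_disj by auto
  have finN: "\<forall>i\<in>?I. finite (case i of (F,s) \<Rightarrow> newF F s)"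
    unfolding newF_def using cyc_edges_finite by auto
  have "card (\<Union>FF') = (\<Sum>i\<in>?I. card (case i of (F,s) \<Rightarrow> newF F s))"
    unfolding FF'_def using card_UN_disjoint[OF finI finN disj] by simp
  also have "\<dots> = (\<Sum>i\<in>?I. card V')" using newF_card by (intro sum.cong) auto
  also have "\<dots> = card FF * p * card V'" by (simp add: card_cartesian_product)
  finally have cU: "card (\<Union>FF') = card FF * p * card V'" .
  define n where "n = card V - 1"
  have "0 < card V" using finV infV card_gt_0_iff by blast
  then have cV: "card V = n + 1" unfolding n_def by simp
  have "card FF * (n + 1) = (n + 1) * n div 2" using card_FF card_complete_edges[OF finV] cV by simp
  moreover have "even ((n + 1) * n)" by simp
  ultimately have "2 * (card FF * (n + 1)) = (n + 1) * n" by simp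
  then have "(n + 1) * (2 * card FF) = (n + 1) * n" by (metis mult.assoc mult.commute)
  then have nF: "n = 2 * card FF" by (simp only: mult_cancel1) simp
  have cV': "card V' = 1 + p * n" using card_V' cV by simp
  have "card (complete_edges V') = card V' * (card V' - 1) div 2" using card_complete_edges[OF finite_V'] .
  also have "\<dots> = card V' * (2 * (p * card FF)) div 2" using cV' nF by (simp add: algebra_simps)
  also have "\<dots> = card FF * p * card V'" by (simp add: algebra_simps)
  finally have cC: "card (complete_edges V') = card (\<Union>FF')" using cU by simp
  have sub: "\<Union>FF' \<subseteq> complete_edges V'" unfolding FF'_def using newF_sub by auto
  have U: "\<Union>FF' = complete_edges V'"
    using card_subset_eq[OF finite_complete_edges[OF finite_V'] sub] cC by simp
  have D: "\<forall>F1\<in>FF'. \<forall>F2\<in>FF'. F1 \<noteq> F2 \<longrightarrow> F1 \<inter> F2 = {}"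
    unfolding FF'_def using newF_disj by fastforce
  have iso: "\<forall>F\<in>FF'. iso_cycles V' F ts'" unfolding FF'_def using newF_iso by auto
  have "OP_solution V' FF' ts'"
    unfolding OP_solution_def edge_partition_def using ge3' U D iso by blast
  then show ?thesis using OP_solvable_from finite_V' card_V'_sum[OF F0] by blast
qed

end


lemma rot_main:
  fixes G :: "('a, 'b) monoid_scheme" and FF :: "'a option set set set"
    and ainf :: nat and as :: "nat list" and p :: nat
  assumes grp: "group G" and fin: "finite (carrier G)"
    and sol: "one_rotational_solution G FF ainf as"
    and pc: "(odd p \<and> 3 \<le> p) \<or> (p = 2 \<and> (\<forall>a\<in>set as. even a))"
  shows "OP_solvable ((p * (ainf - 1) + 1) # concat (map (replicate p) as))"
proof -
  let ?V = "ext_carrier G" and ?ts = "ainf # as"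
  have finV: "finite ?V" using fin unfolding ext_carrier_def by simp
  have infV: "None \<in> ?V" unfolding ext_carrier_def by simp
  have ge: "\<forall>t\<in>set ?ts. 3 \<le> t" and part: "edge_partition ?V FF"
    and isos: "\<forall>F\<in>FF. \<exists>f. iso_cycles_via ?V F ?ts f \<and> fst (f None) = 0"
    using sol unfolding one_rotational_solution_def by auto
  have ex: "\<exists>f. iso_cycles_via ?V F ?ts f \<and> f None = (0,0)" if F: "F \<in> FF" for F
  proof -
    obtain f where f: "iso_cycles_via ?V F ?ts f" "fst (f None) = 0" using isos F by blast
    then have "f None = (0, snd (f None))" by (metis prod.collapse)
    then show ?thesis using rotate_iso[OF f(1) infV _ _ ge] by simp
  qed
  define fm where "fm F = (SOME f. iso_cycles_via ?V F ?ts f \<and> f None = (0,0))" for F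
  have fmF: "iso_cycles_via ?V F ?ts (fm F) \<and> fm F None = (0,0)" if "F \<in> FF" for F
    unfolding fm_def using someI_ex[OF ex[OF that]] .
  have pcase: "(odd p \<and> 3 \<le> p) \<or> (p = 2 \<and> (\<forall>i. 0 < i \<and> i < length ?ts \<longrightarrow> even (?ts!i)))"
  proof (cases "p = 2")
    case True
    then have "\<forall>a\<in>set as. even a" using pc by auto
    then have "\<forall>i. 0 < i \<and> i < length ?ts \<longrightarrow> even (?ts!i)"
      by (auto simp: nth_Cons' nth_mem)
    then show ?thesis using True by blast
  next
    case False then show ?thesis using pc by auto
  qed
  interpret C: constr ?V None FF ?ts p fm
    by unfold_locales (use finV infV part fmF ge pcase in auto)
  have ne: "FF \<noteq> {}"
  proof
    assume "FF = {}"
    then have "complete_edges ?V = {}" using part unfolding edge_partition_def by auto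
    moreover have "one G \<in> carrier G" using grp by (simp add: group.is_monoid monoid.one_closed)
    then have "{None, Some (one G)} \<in> complete_edges ?V"
      unfolding complete_edges_def ext_carrier_def by blast
    ultimately show False by simp
  qed
  have "OP_solvable C.ts'" using C.main[OF ne] .
  then show ?thesis unfolding C.ts'_def by simp
qed

theorem theorem4p2:
  fixes G :: "('a, 'b) monoid_scheme" and FF :: "'a option set set set"
    and ainf :: nat and as :: "nat list"
  assumes "group G" and "finite (carrier G)"
    and "one_rotational_solution G FF ainf as"
  shows "((\<forall>a\<in>set as. even a) \<longrightarrow>
            OP_solvable ((2 * ainf - 1) # concat (map (replicate 2) as)))
       \<and> (\<forall>p::nat. prime p \<and> odd p \<longrightarrow>
            OP_solvable ((p * (ainf - 1) + 1) # concat (map (replicate p) as)))"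
proof (intro conjI impI allI)
  have a3: "3 \<le> ainf" using assms(3) unfolding one_rotational_solution_def by auto
  assume "\<forall>a\<in>set as. even a"
  then have "OP_solvable ((2 * (ainf - 1) + 1) # concat (map (replicate 2) as))"
    using rot_main[OF assms, of 2] by simp
  moreover have "2 * (ainf - 1) + 1 = 2 * ainf - 1" using a3 by simp
  ultimately show "OP_solvable ((2 * ainf - 1) # concat (map (replicate 2) as))" by simp
next
  fix p :: nat assume p: "prime p \<and> odd p"
  then have "2 \<le> p" using prime_ge_2_nat by blast
  then have "3 \<le> p" using p by (cases "p = 2") auto
  then show "OP_solvable ((p * (ainf - 1) + 1) # concat (map (replicate p) as))"
    using rot_main[OF assms, of p] p by blast
qed


end
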